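(* Let $\ell\ge1$, $S=\{1,\dots,\ell\}$, and let $\mathbb C(\mathbf X)$ be the field of rational functions in the $X$-variables $X^i_n$ ($i\in S$, $n\in\mathbb Z$) of the infinite quiver $Q(A_\ell)$, with Poisson bracket $\{X_u,X_v\}=\varepsilon_{uv}X_uX_v$. Let $\mathbb C(a)$ be the field of rational functions in the variables $a_i(n)$ ($i\in S$, $n\in\mathbb Z$) with log-canonical Poisson bracket determined by $\{a_i(n),a_i(n')\}=(\delta_{n',n+1}-\delta_{n',n-1})a_i(n)a_i(n')$ for $i\in S$, $\{a_i(n),a_{i+1}(n')\}=(\delta_{n',n-1}-\delta_{n',n})a_i(n)a_{i+1}(n')$ for $1\le i\le\ell-1$, and all other pairs of generators Poisson commuting. Then the field isomorphism $\beta:\mathbb C(\mathbf X)\to\mathbb C(a)$, $X^i_n\mapsto a_i(n)^{-1}$, is a Poisson map.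
   Context: The quiver $Q(A_\ell)$ has vertices $v^i_n$ ($i\in S$, $n\in\mathbb Z$) and arrows $v^i_n\to v^i_{n+1}$ for all $i$, and $v^{i+1}_n\to v^i_n$, $v^i_{n+1}\to v^{i+1}_n$ for $1\le i\le\ell-1$; its exchange matrix is $\varepsilon_{uv}=\#\{\text{arrows }u\to v\}-\#\{\text{arrows }v\to u\}$, and $X^i_n$ is the $X$-variable at $v^i_n$. (In the paper $a_i(n)=y_i(n)y_i(n+1)/(y_{i-1}(n+1)y_{i+1}(n))$ with $y_0=y_{\ell+1}=1$, the image of the Frenkel–Reshetikhin variable $A_{i,aq^{2n+i}}$; the bracket above is the one induced from the Frenkel–Reshetikhin Poisson structure.) *)

theory Defs
  imports Complex_Main "HOL-Library.Poly_Mapping" "HOL-Library.Product_Lexorder"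
    "HOL-Computational_Algebra.Fraction_Field"
begin

type_synonym var = "nat \<times> int"
type_synonym mpoly = "(var \<Rightarrow>\<^sub>0 nat) \<Rightarrow>\<^sub>0 complex"
type_synonym ratfun = "mpoly fract"

definition Var :: "var \<Rightarrow> mpoly" where
  "Var u = Poly_Mapping.single (Poly_Mapping.single u 1) 1"

definition Xv :: "var \<Rightarrow> ratfun" where
  "Xv u = Fract (Var u) 1"

definition cst :: "complex \<Rightarrow> ratfun" where
  "cst c = Fract (Poly_Mapping.single 0 c) 1"

definition pd :: "var \<Rightarrow> mpoly \<Rightarrow> mpoly" where
  "pd u p = (\<Sum>m\<in>Poly_Mapping.keys p. Poly_Mapping.single (m - Poly_Mapping.single u 1)
                                 (Poly_Mapping.lookup p m * of_nat (Poly_Mapping.lookup m u)))"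

text \<open>Partial derivative of a rational function (quotient rule; independent of the
  representative).\<close>
definition D :: "var \<Rightarrow> ratfun \<Rightarrow> ratfun" where
  "D u f = (SOME d. \<exists>p q. q \<noteq> 0 \<and> f = Fract p q \<and> d = Fract (q * pd u p - p * pd u q) (q * q))"

definition Vars :: "ratfun \<Rightarrow> var set" where
  "Vars f = {u. D u f \<noteq> 0}"

definition PB :: "(var \<Rightarrow> var \<Rightarrow> complex) \<Rightarrow> ratfun \<Rightarrow> ratfun \<Rightarrow> ratfun" where
  "PB c f g = (\<Sum>u\<in>Vars f. \<Sum>v\<in>Vars g. cst (c u v) * Xv u * Xv v * D u f * D v g)"

text \<open>Number of arrows u -> v in the quiver Q(A_l); vertex (i,n) is v^i_n.\<close>
definition arrows :: "nat \<Rightarrow> var \<Rightarrow> var \<Rightarrow> nat" where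
  "arrows l u v = (case u of (i, n) \<Rightarrow> case v of (j, m) \<Rightarrow>
      (if 1 \<le> i \<and> i \<le> l \<and> j = i \<and> m = n + 1 then 1 else 0)
    + (if 1 \<le> j \<and> j \<le> l - 1 \<and> i = j + 1 \<and> m = n then 1 else 0)
    + (if 1 \<le> i \<and> i \<le> l - 1 \<and> j = i + 1 \<and> n = m + 1 then 1 else 0))"

definition epsQ :: "nat \<Rightarrow> var \<Rightarrow> var \<Rightarrow> complex" where
  "epsQ l u v = of_int (int (arrows l u v) - int (arrows l v u))"

definition dlt :: "int \<Rightarrow> int \<Rightarrow> complex" where
  "dlt a b = (if a = b then 1 else 0)"

text \<open>Coefficients of the log-canonical bracket on the a-variables, (i,n) = a_i(n):
  the given generator brackets, completed by antisymmetry.\<close>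
definition cA :: "nat \<Rightarrow> var \<Rightarrow> var \<Rightarrow> complex" where
  "cA l u v = (case u of (i, n) \<Rightarrow> case v of (j, n') \<Rightarrow>
      if 1 \<le> i \<and> i \<le> l \<and> j = i then dlt n' (n + 1) - dlt n' (n - 1)
      else if 1 \<le> i \<and> i \<le> l - 1 \<and> j = i + 1 then dlt n' (n - 1) - dlt n' n
      else if 1 \<le> j \<and> j \<le> l - 1 \<and> i = j + 1 then - (dlt n (n' - 1) - dlt n n')
      else 0)"

definition evb :: "mpoly \<Rightarrow> ratfun" where
  "evb p = (\<Sum>m\<in>Poly_Mapping.keys p. cst (Poly_Mapping.lookup p m) * (\<Prod>u\<in>Poly_Mapping.keys m. inverse (Xv u) ^ Poly_Mapping.lookup m u))"

definition beta :: "ratfun \<Rightarrow> ratfun" where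
  "beta f = (SOME r. \<exists>p q. q \<noteq> 0 \<and> f = Fract p q \<and> r = evb p / evb q)"

definition pvars :: "mpoly \<Rightarrow> var set" where
  "pvars p = (\<Union>m\<in>Poly_Mapping.keys p. Poly_Mapping.keys m)"

definition ratfunS :: "nat \<Rightarrow> ratfun set" where
  "ratfunS l = {Fract p q | p q. q \<noteq> 0 \<and> pvars p \<union> pvars q \<subseteq> {1..l} \<times> UNIV}"

end

theory Submission
  imports Defs
begin


abbreviation sng where "sng \<equiv> Poly_Mapping.single"
abbreviation lk where "lk \<equiv> Poly_Mapping.lookup"
abbreviation ks where "ks \<equiv> Poly_Mapping.keys"

lemma pm_expand: "(p :: 'a \<Rightarrow>\<^sub>0 'b::comm_monoid_add) = (\<Sum>m\<in>ks p. sng m (lk p m))"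
proof (rule poly_mapping_eqI)
  fix k
  show "lk p k = lk (\<Sum>m\<in>ks p. sng m (lk p m)) k"
    by (simp add: lookup_sum lookup_single when_def in_keys_iff)
qed

lemma pm_induct:
  fixes m :: "'a \<Rightarrow>\<^sub>0 'b::comm_monoid_add"
  assumes "P 0" "\<And>a b. P a \<Longrightarrow> P b \<Longrightarrow> P (a + b)" "\<And>u k. P (sng u k)"
  shows "P m"
proof -
  have "P (\<Sum>u\<in>B. sng u (lk m u))" if "finite B" for B
    using that by (induction B rule: finite_induct) (auto intro: assms)
  then show ?thesis using pm_expand[of m] by (metis finite_keys)
qed

lemma mult_expand: "(p::mpoly) * q = (\<Sum>m\<in>ks p. \<Sum>n\<in>ks q. sng (m+n) (lk p m * lk q n))"
proof -
  have "p * q = (\<Sum>m\<in>ks p. sng m (lk p m)) * (\<Sum>n\<in>ks q. sng n (lk q n))"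
    using pm_expand[of p] pm_expand[of q] by simp
  also have "\<dots> = (\<Sum>m\<in>ks p. \<Sum>n\<in>ks q. sng (m+n) (lk p m * lk q n))"
    by (simp add: sum_product mult_single)
  finally show ?thesis .
qed

lemma pd_superset:
  assumes "finite A" "ks p \<subseteq> A"
  shows "pd u p = (\<Sum>m\<in>A. sng (m - sng u 1) (lk p m * of_nat (lk m u)))"
  unfolding pd_def
  by (rule sum.mono_neutral_left) (use assms in \<open>auto simp: in_keys_iff\<close>)

lemma pd_zero[simp]: "pd u 0 = 0"
  by (simp add: pd_def)

lemma pd_add: "pd u (p + q) = pd u p + pd u q"
proof -
  let ?A = "ks p \<union> ks q"
  have "pd u (p + q) = (\<Sum>m\<in>?A. sng (m - sng u 1) (lk (p+q) m * of_nat (lk m u)))"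
    by (rule pd_superset) (auto simp: keys_add)
  also have "\<dots> = (\<Sum>m\<in>?A. sng (m - sng u 1) (lk p m * of_nat (lk m u)))
     + (\<Sum>m\<in>?A. sng (m - sng u 1) (lk q m * of_nat (lk m u)))"
    by (simp add: lookup_add distrib_right single_add sum.distrib)
  also have "\<dots> = pd u p + pd u q"
    by (simp add: pd_superset[where A="ks p \<union> ks q" and p=p] pd_superset[where A="ks p \<union> ks q" and p=q])
  finally show ?thesis .
qed

lemma pd_sum: "pd u (\<Sum>i\<in>A. f i) = (\<Sum>i\<in>A. pd u (f i))"
  by (induction A rule: infinite_finite_induct) (auto simp: pd_add)

lemma pd_single: "pd u (sng m c) = sng (m - sng u 1) (c * of_nat (lk m u))"
  by (subst pd_superset[of "{m}"]) auto

lemma pd_uminus: "pd u (- p) = - pd u p"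
  using pd_add[of u p "-p"] by (simp add: eq_neg_iff_add_eq_0 add.commute)

lemma pd_diff: "pd u (p - q) = pd u p - pd u q"
  using pd_add[of u p "-q"] pd_uminus[of u q] by simp

lemma mono_key:
  "sng (m + n - sng u 1) (c * of_nat (lk m u + lk n u)) =
   sng (m + (n - sng u 1)) (c * of_nat (lk n u)) + sng ((m - sng u 1) + n) (c * of_nat (lk m u))"
proof -
  have e1: "m + (n - sng u 1) = m + n - sng u 1" if "lk n u > 0"
    by (rule poly_mapping_eqI) (use that in \<open>auto simp: lookup_add lookup_minus lookup_single when_def\<close>)
  have e2: "(m - sng u 1) + n = m + n - sng u 1" if "lk m u > 0"
    by (rule poly_mapping_eqI) (use that in \<open>auto simp: lookup_add lookup_minus lookup_single when_def\<close>)
  show ?thesis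
  proof (cases "lk n u > 0")
    case True
    then show ?thesis
    proof (cases "lk m u > 0")
      case True
      then show ?thesis using e1 e2 \<open>lk n u > 0\<close> by (simp add: single_add[symmetric] algebra_simps)
    next
      case False
      then show ?thesis using e1 \<open>lk n u > 0\<close> by simp
    qed
  next
    case False
    then show ?thesis using e2 by (cases "lk m u > 0") auto
  qed
qed

lemma pd_mult: "pd u (p * q) = p * pd u q + pd u p * q"
proof -
  have "pd u (p * q) = (\<Sum>m\<in>ks p. \<Sum>n\<in>ks q. sng (m+n - sng u 1) (lk p m * lk q n * of_nat (lk m u + lk n u)))"
    by (simp add: mult_expand pd_sum pd_single lookup_add)
  also have "\<dots> = (\<Sum>m\<in>ks p. \<Sum>n\<in>ks q. sng (m + (n - sng u 1)) (lk p m * lk q n * of_nat (lk n u))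
     + sng ((m - sng u 1) + n) (lk p m * lk q n * of_nat (lk m u)))"
    by (simp only: mono_key)
  also have "\<dots> = (\<Sum>m\<in>ks p. \<Sum>n\<in>ks q. sng (m + (n - sng u 1)) (lk p m * (lk q n * of_nat (lk n u))))
     + (\<Sum>m\<in>ks p. \<Sum>n\<in>ks q. sng ((m - sng u 1) + n) (lk p m * of_nat (lk m u) * lk q n))"
    by (simp add: sum.distrib ac_simps)
  also have "\<dots> = p * pd u q + pd u p * q"
  proof -
    have "p * pd u q = (\<Sum>m\<in>ks p. sng m (lk p m)) * (\<Sum>n\<in>ks q. sng (n - sng u 1) (lk q n * of_nat (lk n u)))"
      using pm_expand[of p] by (simp add: pd_def)
    moreover have "pd u p * q = (\<Sum>m\<in>ks p. sng (m - sng u 1) (lk p m * of_nat (lk m u))) * (\<Sum>n\<in>ks q. sng n (lk q n))"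
      using pm_expand[of q] by (simp add: pd_def)
    ultimately show ?thesis by (simp add: sum_product mult_single)
  qed
  finally show ?thesis .
qed

lemma pd_const: "pd u (sng 0 c) = 0"
  by (simp add: pd_single)

lemma pd_one: "pd u 1 = 0"
  using pd_const[of u 1] by simp

lemma pd_Var: "pd u (Var v) = (if v = u then 1 else 0)"
  by (simp add: Var_def pd_single lookup_single when_def)



lemma D_Fract_aux:
  assumes "q \<noteq> 0" "q' \<noteq> 0" "Fract p q = Fract p' q'"
  shows "Fract (q' * pd u p' - p' * pd u q') (q' * q') = Fract (q * pd u p - p * pd u q) (q * q)"
proof -
  have e: "p * q' = p' * q" using assms by (simp add: eq_fract)
  have d: "pd u p * q' + p * pd u q' = pd u p' * q + p' * pd u q"
    using arg_cong[OF e, of "pd u"] by (simp add: pd_mult algebra_simps)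
  have "(q' * pd u p' - p' * pd u q') * (q * q) = (q * pd u p - p * pd u q) * (q' * q')"
  proof -
    have "(q' * pd u p' - p' * pd u q') * (q * q) - (q * pd u p - p * pd u q) * (q' * q')
      = q * q' * (pd u p' * q + p' * pd u q - pd u p * q' - p * pd u q') + (p*q' - p'*q) * (q * pd u q' + q' * pd u q)"
      by (simp add: algebra_simps)
    also have "\<dots> = 0" using e d by (simp add: algebra_simps)
    finally show ?thesis by simp
  qed
  then show ?thesis using assms by (simp add: eq_fract)
qed

lemma D_Fract: "q \<noteq> 0 \<Longrightarrow> D u (Fract p q) = Fract (q * pd u p - p * pd u q) (q * q)"
  unfolding D_def
  by (rule someI2[where a="Fract (q * pd u p - p * pd u q) (q * q)"]) (auto dest: D_Fract_aux)

lemma D_zero[simp]: "D u 0 = 0"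
  using D_Fract[of 1 u 0] by (simp add: Zero_fract_def[symmetric] fract_collapse)

lemma D_add: "D u (f + g) = D u f + D u g"
proof (cases f)
  case (Fract p q)
  then show ?thesis
  proof (cases g)
    case (Fract r s)
    have "D u (f + g) = Fract (q * s * pd u (p * s + r * q) - (p * s + r * q) * pd u (q * s)) (q * s * (q * s))"
      using \<open>f = _\<close> \<open>q \<noteq> 0\<close> Fract by (simp add: D_Fract)
    also have "\<dots> = D u f + D u g"
      unfolding \<open>f = _\<close> \<open>g = _\<close> using \<open>q \<noteq> 0\<close> \<open>s \<noteq> 0\<close>
      apply (simp add: D_Fract eq_fract pd_add pd_mult)
      by (simp add: algebra_simps)
    finally show ?thesis .
  qed
qed

lemma D_mult: "D u (f * g) = D u f * g + f * D u g"
proof (cases f)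
  case (Fract p q)
  then show ?thesis
  proof (cases g)
    case (Fract r s)
    have "D u (f * g) = Fract (q * s * pd u (p * r) - (p * r) * pd u (q * s)) (q * s * (q * s))"
      using \<open>f = _\<close> \<open>q \<noteq> 0\<close> Fract by (simp add: D_Fract)
    also have "\<dots> = D u f * g + f * D u g"
      unfolding \<open>f = _\<close> \<open>g = _\<close> using \<open>q \<noteq> 0\<close> \<open>s \<noteq> 0\<close>
      apply (simp add: D_Fract eq_fract pd_add pd_mult)
      by (simp add: algebra_simps)
    finally show ?thesis .
  qed
qed

lemma D_inverse: "D u (inverse f) = - D u f * inverse f ^ 2"
proof (cases f)
  case (Fract p q)
  show ?thesis
  proof (cases "p = 0")
    case True
    then show ?thesis using Fract by (simp add: fract_collapse)
  next
    case False
    then show ?thesis using Fract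
      by (simp add: D_Fract eq_fract power2_eq_square)
  qed
qed

lemma D_Xv: "D u (Xv v) = (if v = u then 1 else 0)"
  by (simp add: Xv_def D_Fract pd_Var pd_one fract_collapse)

lemma D_cst: "D u (cst c) = 0"
  by (simp add: cst_def D_Fract pd_const pd_one fract_collapse)

lemma D_one[simp]: "D u 1 = 0"
  using D_cst[of u 1] by (simp add: cst_def fract_collapse)

lemma D_sum: "D u (\<Sum>i\<in>A. f i) = (\<Sum>i\<in>A. D u (f i))"
  by (induction A rule: infinite_finite_induct) (auto simp: D_add)

lemma D_power: "D u (f ^ k) = of_nat k * f ^ (k - 1) * D u f"
proof (induction k)
  case 0
  then show ?case by simp
next
  case (Suc k)
  then show ?case by (cases k) (auto simp: D_mult algebra_simps)
qed

lemma D_prod0: "(\<And>i. i \<in> A \<Longrightarrow> D u (f i) = 0) \<Longrightarrow> D u (\<Prod>i\<in>A. f i) = 0"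
proof (induction A rule: infinite_finite_induct)
  case (infinite A)
  then show ?case by simp
next
  case empty
  then show ?case by simp
next
  case (insert x F)
  then show ?case by (simp add: D_mult)
qed

lemma D_divide: "D u (f / g) = D u f * inverse g - f * D u g * inverse g ^ 2"
  by (simp add: divide_inverse D_mult D_inverse)



lemma cst_add: "cst (a + b) = cst a + cst b"
  by (simp add: cst_def single_add)
lemma cst_mult: "cst (a * b) = cst a * cst b"
  by (simp add: cst_def mult_single)
lemma cst_zero[simp]: "cst 0 = 0"
  by (simp add: cst_def fract_collapse)
lemma cst_one[simp]: "cst 1 = 1"
  by (simp add: cst_def fract_collapse)
lemma cst_of_nat: "cst (of_nat k) = of_nat k"
  by (induction k) (simp_all add: cst_add)
lemma cst_uminus: "cst (- a) = - cst a"
  by (simp add: cst_def single_uminus)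

lemma Fract1_add: "Fract (a + b) 1 = Fract a 1 + Fract (b::mpoly) 1"
  using add_fract[of 1 1 a b] by simp
lemma Fract1_mult: "Fract (a * b) 1 = Fract a 1 * Fract (b::mpoly) 1"
  by simp
lemma Fract1_sum: "Fract (\<Sum>i\<in>A. f i) 1 = (\<Sum>i\<in>A. Fract (f i :: mpoly) 1)"
  by (induction A rule: infinite_finite_induct) (simp_all add: fract_collapse Fract1_add)
lemma Fract1_eq0: "Fract (a::mpoly) 1 = 0 \<longleftrightarrow> a = 0"
  by (simp add: Zero_fract_def eq_fract)

lemma Var_nz: "Var u \<noteq> 0"
  unfolding Var_def by (metis lookup_single_eq lookup_zero zero_neq_one)
lemma Xv_nz: "Xv u \<noteq> 0"
  using Var_nz by (simp add: Xv_def Fract1_eq0)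

definition mon :: "(var \<Rightarrow>\<^sub>0 nat) \<Rightarrow> ratfun" where
  "mon m = (\<Prod>u\<in>ks m. inverse (Xv u) ^ lk m u)"

lemma mon_superset:
  assumes "finite A" "ks m \<subseteq> A"
  shows "mon m = (\<Prod>u\<in>A. inverse (Xv u) ^ lk m u)"
  unfolding mon_def
  by (rule prod.mono_neutral_left) (use assms in \<open>auto simp: in_keys_iff\<close>)

lemma mon_add: "mon (m + n) = mon m * mon n"
proof -
  let ?A = "ks m \<union> ks n"
  have "mon (m + n) = (\<Prod>u\<in>?A. inverse (Xv u) ^ lk (m + n) u)"
    by (rule mon_superset) (auto simp: keys_add)
  also have "\<dots> = (\<Prod>u\<in>?A. inverse (Xv u) ^ lk m u) * (\<Prod>u\<in>?A. inverse (Xv u) ^ lk n u)"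
    by (simp add: lookup_add power_add prod.distrib)
  also have "\<dots> = mon m * mon n"
    by (simp add: mon_superset[where A="ks m \<union> ks n" and m=m] mon_superset[where A="ks m \<union> ks n" and m=n])
  finally show ?thesis .
qed

lemma mon_zero[simp]: "mon 0 = 1"
  by (simp add: mon_def)

lemma evb_superset:
  assumes "finite A" "ks p \<subseteq> A"
  shows "evb p = (\<Sum>m\<in>A. cst (lk p m) * mon m)"
  unfolding evb_def mon_def[symmetric]
  by (rule sum.mono_neutral_left) (use assms in \<open>auto simp: in_keys_iff\<close>)

lemma evb_zero[simp]: "evb 0 = 0"
  by (simp add: evb_def)

lemma evb_add: "evb (p + q) = evb p + evb q"
proof -
  let ?A = "ks p \<union> ks q"
  have "evb (p + q) = (\<Sum>m\<in>?A. cst (lk (p+q) m) * mon m)"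
    by (rule evb_superset) (auto simp: keys_add)
  also have "\<dots> = (\<Sum>m\<in>?A. cst (lk p m) * mon m) + (\<Sum>m\<in>?A. cst (lk q m) * mon m)"
    by (simp add: lookup_add cst_add distrib_right sum.distrib)
  also have "\<dots> = evb p + evb q"
    by (simp add: evb_superset[where A="ks p \<union> ks q" and p=p] evb_superset[where A="ks p \<union> ks q" and p=q])
  finally show ?thesis .
qed

lemma evb_sum: "evb (\<Sum>i\<in>A. f i) = (\<Sum>i\<in>A. evb (f i))"
  by (induction A rule: infinite_finite_induct) (auto simp: evb_add)

lemma evb_single: "evb (sng m c) = cst c * mon m"
  by (subst evb_superset[of "{m}"]) auto

lemma evb_uminus: "evb (- p) = - evb p"
  using evb_add[of p "-p"] by (simp add: eq_neg_iff_add_eq_0 add.commute)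

lemma evb_diff: "evb (p - q) = evb p - evb q"
  using evb_add[of p "-q"] evb_uminus[of q] by simp

lemma evb_mult: "evb (p * q) = evb p * evb q"
proof -
  have "evb (p * q) = (\<Sum>m\<in>ks p. \<Sum>n\<in>ks q. cst (lk p m) * mon m * (cst (lk q n) * mon n))"
    by (simp add: mult_expand evb_sum evb_single cst_mult mon_add ac_simps)
  also have "\<dots> = evb p * evb q"
    unfolding evb_def mon_def[symmetric] by (simp add: sum_product)
  finally show ?thesis .
qed

lemma evb_one[simp]: "evb 1 = 1"
  using evb_single[of 0 1] by simp

lemma evb_const: "evb (sng 0 c) = cst c"
  by (simp add: evb_single)

lemma mon_single: "mon (sng u k) = inverse (Xv u) ^ k"
  by (cases "k = 0") (simp_all add: mon_def)

lemma evb_Var: "evb (Var u) = inverse (Xv u)"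
  by (simp add: Var_def evb_single mon_single)

lemma Fract_single_pow: "Fract (sng (sng u k) 1) 1 = Xv u ^ k"
proof (induction k)
  case 0 then show ?case by (simp add: fract_collapse)
next
  case (Suc k)
  have "sng (sng u (Suc k)) (1::complex) = Var u * sng (sng u k) 1"
    by (simp add: Var_def mult_single single_add[symmetric])
  then show ?case using Suc by (simp add: Xv_def Fract1_mult)
qed

lemma mon_inv: "mon m * Fract (sng m 1) 1 = 1"
proof (induction m rule: pm_induct)
  case 1 then show ?case by (simp add: fract_collapse)
next
  case (2 a b)
  have "mon (a + b) * Fract (sng (a + b) 1) 1 = (mon a * Fract (sng a 1) 1) * (mon b * Fract (sng b 1) 1)"
  proof -
    have h: "Fract (sng (a + b) (1::complex)) 1 = Fract (sng a 1) 1 * Fract (sng b 1) 1" by (simp add: mult_single)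
    show ?thesis unfolding mon_add h by (simp only: mult_ac)
  qed
  then show ?case using 2 by simp
next
  case (3 u k)
  then show ?case using Xv_nz[of u] by (simp add: mon_single Fract_single_pow power_inverse)
qed

lemma evb_nz:
  assumes "q \<noteq> 0" shows "evb q \<noteq> 0"
proof
  assume ev0: "evb q = 0"
  define K where "K = ks q"
  define M where "M = (\<Sum>m\<in>K. m)"
  have fin: "finite K" by (simp add: K_def)
  have le: "lk m u \<le> lk M u" if "m \<in> K" for m u
    unfolding M_def lookup_sum using that fin by (intro member_le_sum) auto
  have split: "M = m + (M - m)" if "m \<in> K" for m
    by (rule poly_mapping_eqI) (use le[OF that] in \<open>simp add: lookup_add lookup_minus\<close>)
  define q' where "q' = (\<Sum>m\<in>K. sng (M - m) (lk q m))"
  have "evb q * Fract (sng M 1) 1 = (\<Sum>m\<in>K. cst (lk q m) * (mon m * Fract (sng M 1) 1))"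
    unfolding evb_def mon_def[symmetric] K_def by (simp add: sum_distrib_left sum_distrib_right ac_simps)
  also have "\<dots> = (\<Sum>m\<in>K. cst (lk q m) * Fract (sng (M - m) 1) 1)"
  proof (rule sum.cong)
    fix m assume "m \<in> K"
    have "mon m * Fract (sng M 1) 1 = (mon m * Fract (sng m 1) 1) * Fract (sng (M - m) 1) 1"
    proof -
      have "sng M (1::complex) = sng m 1 * sng (M - m) 1"
        by (subst split[OF \<open>m \<in> K\<close>]) (simp add: mult_single)
      then have h: "Fract (sng M (1::complex)) 1 = Fract (sng m 1) 1 * Fract (sng (M - m) 1) 1"
        by simp
      show ?thesis unfolding h by (simp only: mult_ac)
    qed
    then show "cst (lk q m) * (mon m * Fract (sng M 1) 1) = cst (lk q m) * Fract (sng (M - m) 1) 1"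
      by (simp add: mon_inv)
  qed simp
  also have "\<dots> = Fract q' 1"
    unfolding q'_def Fract1_sum by (simp add: cst_def mult_single)
  finally have eq: "evb q * Fract (sng M 1) 1 = Fract q' 1" .
  obtain m0 where m0: "m0 \<in> K"
    using assms unfolding K_def by (metis all_not_in_conv in_keys_iff poly_mapping_eqI lookup_zero)
  have inj: "m = m0" if "m \<in> K" "M - m = M - m0" for m
  proof (rule poly_mapping_eqI)
    fix u
    have "lk (M - m) u = lk (M - m0) u" using that by simp
    then show "lk m u = lk m0 u" using le[OF that(1), of u] le[OF m0, of u]
      by (simp add: lookup_minus)
  qed
  have "lk q' (M - m0) = (\<Sum>m\<in>K. if m = m0 then lk q m else 0)"
    unfolding q'_def lookup_sum
    by (rule sum.cong) (auto simp: lookup_single when_def dest: inj)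
  also have "\<dots> = lk q m0" using fin m0 by simp
  finally have "q' \<noteq> 0" using m0 unfolding K_def by (auto simp: in_keys_iff)
  then have "Fract q' 1 \<noteq> 0" by (simp add: Fract1_eq0)
  with eq ev0 show False by simp
qed



lemma beta_Fract_aux:
  assumes "q \<noteq> 0" "q' \<noteq> 0" "Fract p q = Fract p' q'"
  shows "evb p' / evb q' = evb p / evb q"
proof -
  have "p * q' = p' * q" using assms by (simp add: eq_fract)
  then have "evb p * evb q' = evb p' * evb q" by (metis evb_mult)
  then show ?thesis using evb_nz[OF assms(1)] evb_nz[OF assms(2)]
    by (simp add: frac_eq_eq)
qed

lemma beta_Fract: "q \<noteq> 0 \<Longrightarrow> beta (Fract p q) = evb p / evb q"
  unfolding beta_def
  by (rule someI2[where a="evb p / evb q"]) (auto dest: beta_Fract_aux)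

lemma beta_zero[simp]: "beta 0 = 0"
  by (simp add: Zero_fract_def beta_Fract)

lemma beta_add: "beta (f + g) = beta f + beta g"
proof (cases f)
  case (Fract p q)
  then show ?thesis
  proof (cases g)
    case (Fract r s)
    have nz: "evb q \<noteq> 0" "evb s \<noteq> 0" using evb_nz \<open>q \<noteq> 0\<close> \<open>s \<noteq> 0\<close> by auto
    show ?thesis unfolding \<open>f = _\<close> \<open>g = _\<close> using \<open>q \<noteq> 0\<close> \<open>s \<noteq> 0\<close> nz
      by (simp add: beta_Fract evb_add evb_mult add_divide_eq_iff divide_add_eq_iff)
  qed
qed

lemma beta_mult: "beta (f * g) = beta f * beta g"
proof (cases f)
  case (Fract p q)
  then show ?thesis
  proof (cases g)
    case (Fract r s)
    show ?thesis unfolding \<open>f = _\<close> \<open>g = _\<close> using \<open>q \<noteq> 0\<close> \<open>s \<noteq> 0\<close>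
      by (simp add: beta_Fract evb_mult)
  qed
qed

lemma beta_cst: "beta (cst c) = cst c"
  by (simp add: cst_def beta_Fract evb_const)

lemma beta_Xv: "beta (Xv u) = inverse (Xv u)"
  by (simp add: Xv_def beta_Fract evb_Var)

lemma beta_sum: "beta (\<Sum>i\<in>A. f i) = (\<Sum>i\<in>A. beta (f i))"
  by (induction A rule: infinite_finite_induct) (auto simp: beta_add)

lemma beta_inj: "beta f = 0 \<Longrightarrow> f = 0"
proof (cases f)
  case (Fract p q)
  assume "beta f = 0"
  then have "evb p = 0" using Fract evb_nz[of q] by (simp add: beta_Fract)
  then have "p = 0" using evb_nz by blast
  then show ?thesis using Fract by (simp add: fract_collapse)
qed

lemma D_inv_Xv_pow: "D v (inverse (Xv u) ^ k) = (if u = v then - of_nat k * inverse (Xv v) ^ (k - 1) * inverse (Xv v) ^ 2 else 0)"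
  by (simp add: D_power D_inverse D_Xv)

lemma D_mon: "D v (mon m) = - of_nat (lk m v) * mon (m - sng v 1) * inverse (Xv v) ^ 2"
proof -
  let ?A = "insert v (ks m)"
  let ?B = "ks m - {v}"
  define P where "P = (\<Prod>u\<in>?B. inverse (Xv u) ^ lk m u)"
  have fA: "finite ?A" by simp
  have m1: "mon m = inverse (Xv v) ^ lk m v * P"
    unfolding P_def by (subst mon_superset[OF fA]) (simp_all add: prod.insert_remove subset_insertI)
  have ksub: "ks (m - sng v 1) \<subseteq> ?A"
    by (auto simp: in_keys_iff lookup_minus)
  have m2: "mon (m - sng v 1) = inverse (Xv v) ^ (lk m v - 1) * P"
  proof -
    have "mon (m - sng v 1) = inverse (Xv v) ^ (lk m v - 1) * (\<Prod>u\<in>?B. inverse (Xv u) ^ lk (m - sng v 1) u)"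
      by (subst mon_superset[OF fA ksub]) (simp_all add: prod.insert_remove lookup_minus)
    also have "(\<Prod>u\<in>?B. inverse (Xv u) ^ lk (m - sng v 1) u) = P"
      unfolding P_def by (rule prod.cong) (auto simp: lookup_minus lookup_single)
    finally show ?thesis .
  qed
  have DP: "D v P = 0"
    unfolding P_def by (rule D_prod0) (auto simp: D_inv_Xv_pow)
  show ?thesis
    unfolding m1 m2 by (simp add: D_mult DP D_inv_Xv_pow ac_simps)
qed

lemma D_evb: "D v (evb p) = - evb (pd v p) * inverse (Xv v) ^ 2"
proof -
  have "D v (evb p) = (\<Sum>m\<in>ks p. cst (lk p m) * D v (mon m))"
    unfolding evb_def mon_def[symmetric] by (simp add: D_sum D_mult D_cst)
  also have "\<dots> = (\<Sum>m\<in>ks p. - (cst (lk p m) * of_nat (lk m v) * mon (m - sng v 1) * inverse (Xv v) ^ 2))"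
    by (rule sum.cong) (simp_all add: D_mon)
  also have "\<dots> = - evb (pd v p) * inverse (Xv v) ^ 2"
    unfolding pd_def evb_sum evb_single
    by (simp add: cst_mult cst_of_nat sum_distrib_right sum_negf)
  finally show ?thesis .
qed

lemma D_beta: "D v (beta f) = - beta (D v f) * inverse (Xv v) ^ 2"
proof (cases f)
  case (Fract p q)
  have nz: "evb q \<noteq> 0" using evb_nz \<open>q \<noteq> 0\<close> by auto
  show ?thesis unfolding Fract using \<open>q \<noteq> 0\<close> nz Xv_nz[of v]
    by (simp add: beta_Fract D_Fract D_divide D_evb evb_mult evb_diff field_simps power2_eq_square)
qed

lemma Vars_beta: "Vars (beta f) = Vars f"
proof -
  have "D v (beta f) \<noteq> 0 \<longleftrightarrow> D v f \<noteq> 0" for v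
    using Xv_nz[of v] beta_inj[of "D v f"] by (auto simp: D_beta)
  then show ?thesis by (simp add: Vars_def)
qed

lemma beta_PB: "beta (PB c f g) = PB c (beta f) (beta g)"
proof -
  have "beta (PB c f g) = (\<Sum>u\<in>Vars f. \<Sum>v\<in>Vars g. cst (c u v) * inverse (Xv u) * inverse (Xv v) * beta (D u f) * beta (D v g))"
    by (simp add: PB_def beta_sum beta_mult beta_cst beta_Xv)
  also have "\<dots> = PB c (beta f) (beta g)"
    unfolding PB_def Vars_beta
  proof (intro sum.cong refl)
    fix u v
    have h: "Xv w * inverse (Xv w) ^ 2 = inverse (Xv w)" for w
      using Xv_nz[of w] by (simp add: power2_eq_square)
    have e1: "cst (c u v) * Xv u * Xv v * D u (beta f) * D v (beta g) = cst (c u v) * Xv u * Xv v * (- beta (D u f) * inverse (Xv u) ^ 2) * (- beta (D v g) * inverse (Xv v) ^ 2)"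
      by (simp only: D_beta)
    have e2: "cst (c u v) * Xv u * Xv v * (- beta (D u f) * inverse (Xv u) ^ 2) * (- beta (D v g) * inverse (Xv v) ^ 2)
       = cst (c u v) * (Xv u * inverse (Xv u) ^ 2) * (Xv v * inverse (Xv v) ^ 2) * beta (D u f) * beta (D v g)"
      by (simp add: ac_simps)
    then show "cst (c u v) * inverse (Xv u) * inverse (Xv v) * beta (D u f) * beta (D v g) =
        cst (c u v) * Xv u * Xv v * D u (beta f) * D v (beta g)"
      by (simp only: e1 e2 h)
  qed
  finally show ?thesis .
qed

lemma epsQ_cA: "epsQ l u v = cA l u v"
proof -
  obtain i n j m where uv: "u = (i, n)" "v = (j, m)" by (cases u, cases v) auto
  show ?thesis unfolding uv
    by (auto simp: epsQ_def cA_def arrows_def dlt_def)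
qed

theorem proposition4p4:
  fixes l :: nat
  assumes "l \<ge> 1"
  shows "\<forall>f\<in>ratfunS l. \<forall>g\<in>ratfunS l.
           beta (PB (epsQ l) f g) = PB (cA l) (beta f) (beta g)"
proof (intro ballI)
  fix f g
  have "epsQ l = cA l" by (intro ext) (rule epsQ_cA)
  then show "beta (PB (epsQ l) f g) = PB (cA l) (beta f) (beta g)" by (simp add: beta_PB)
qed

end
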